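(* For each pair of integers $s,b\ge1$, the $(s,b)$-Generacci sequence exists and is unique. Moreover, every positive integer has exactly one $(s,b)$-Generacci legal decomposition using terms of the $(s,b)$-Generacci sequence.
   Context: Fix integers $s,b\ge1$. For an increasing sequence of positive integers $(a_i)_{i\ge1}$, the bins are $\mathcal B_n=\{a_{b(n-1)+1},\dots,a_{bn}\}$ for $n\ge1$, and $\mathcal B_n=\emptyset$ for $n\le 0$. An $(s,b)$-Generacci legal decomposition of a positive integer $m$ using this sequence is an expression $m=a_{\ell_1}+\cdots+a_{\ell_k}$ with $a_{\ell_1}>a_{\ell_2}>\cdots>a_{\ell_k}$ such that for all $i$ and all $j$, $\{a_{\ell_i},a_{\ell_{i+1}}\}\not\subset \mathcal B_{j-s}\cup\mathcal B_{j-s+1}\cup\cdots\cup\mathcal B_j$ (so no two summands lie in the same bin, and the bins containing any two summands have at least $s$ bins strictly between them). The $(s,b)$-Generacci sequence is the increasing sequence of positive integers $(a_i)_{i\ge1}$ in which each $a_i$ is the smallest positive integer that has no $(s,b)$-Generacci legal decomposition using only elements of $\{a_1,\dots,a_{i-1}\}$. *)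

theory Defs
  imports Main
begin

text \<open>Sequences are functions nat => nat; only the values at indices i >= 1 matter
  (the paper indexes a_1, a_2, ...).  The value at index 0 is irrelevant.\<close>

definition gen_bin :: "nat \<Rightarrow> (nat \<Rightarrow> nat) \<Rightarrow> int \<Rightarrow> nat set" where
  "gen_bin b a n = (if n \<le> 0 then {} else a ` {b * (nat n - 1) + 1 .. b * nat n})"

definition gen_legal_decomp ::
  "nat \<Rightarrow> nat \<Rightarrow> (nat \<Rightarrow> nat) \<Rightarrow> nat set \<Rightarrow> nat \<Rightarrow> nat list \<Rightarrow> bool" where
  "gen_legal_decomp s b a T m xs \<longleftrightarrow>
     xs \<noteq> [] \<and> set xs \<subseteq> T \<and> sorted_wrt (>) xs \<and> sum_list xs = m \<and>
     (\<forall>i. Suc i < length xs \<longrightarrow>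
        (\<forall>j::int. \<not> {xs ! i, xs ! Suc i} \<subseteq> (\<Union>t\<in>{j - int s .. j}. gen_bin b a t)))"

definition is_generacci :: "nat \<Rightarrow> nat \<Rightarrow> (nat \<Rightarrow> nat) \<Rightarrow> bool" where
  "is_generacci s b a \<longleftrightarrow>
     strict_mono_on {1..} a \<and>
     (\<forall>i\<ge>1. 0 < a i \<and>
        \<not> (\<exists>xs. gen_legal_decomp s b a (a ` {1..<i}) (a i) xs) \<and>
        (\<forall>m. 0 < m \<and> m < a i \<longrightarrow> (\<exists>xs. gen_legal_decomp s b a (a ` {1..<i}) m xs)))"

end

theory Submission
  imports Defs
begin

function NN :: "nat \<Rightarrow> nat \<Rightarrow> nat \<Rightarrow> nat" where
  "NN s b 0 = 0"
| "NN s b (Suc k) = NN s b k + 1 + NN s b (b * (k div b - s))"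
  by pat_completeness auto
termination
proof (relation "measure (\<lambda>(s,b,k). k)")
  fix s b k :: nat
  have "b * (k div b - s) \<le> b * (k div b)" by simp
  also have "\<dots> \<le> k" by (simp add: mult.commute)
  finally show "((s, b, b * (k div b - s)), s, b, Suc k) \<in> measure (\<lambda>(s, b, k). k)" by simp
qed auto

lemma p_le: "b * (k div b - s) \<le> (k::nat)"
proof -
  have "b * (k div b - s) \<le> b * (k div b)" by simp
  also have "\<dots> \<le> k" by (simp add: mult.commute)
  finally show ?thesis .
qed

lemma NN_Suc_less: "NN s b k < NN s b (Suc k)" by simp

lemma NN_mono_less: "i < j \<Longrightarrow> NN s b i < NN s b j"
  using lift_Suc_mono_less[of "NN s b", OF NN_Suc_less] by blast

lemma NN_ge: "k \<le> NN s b k"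
  by (induction k) auto

definition ileg :: "nat \<Rightarrow> nat \<Rightarrow> nat list \<Rightarrow> bool" where
  "ileg s b ks \<longleftrightarrow> sorted_wrt (>) ks \<and>
     (\<forall>i. Suc i < length ks \<longrightarrow> (ks ! Suc i - 1) div b + s < (ks ! i - 1) div b)"

lemma ileg_Nil[simp]: "ileg s b []" by (simp add: ileg_def)

lemma ileg_Cons: "ileg s b (x # ks) \<longleftrightarrow> ileg s b ks \<and> (\<forall>y\<in>set ks. y < x) \<and>
   (ks \<noteq> [] \<longrightarrow> (hd ks - 1) div b + s < (x - 1) div b)"
proof
  assume h: "ileg s b (x # ks)"
  have 1: "\<forall>i. Suc i < length ks \<longrightarrow> (ks ! Suc i - 1) div b + s < (ks ! i - 1) div b"
  proof (intro allI impI)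
    fix i assume "Suc i < length ks"
    then show "(ks ! Suc i - 1) div b + s < (ks ! i - 1) div b"
      using h[unfolded ileg_def] by (metis Suc_less_eq length_Cons nth_Cons_Suc)
  qed
  have 2: "ks \<noteq> [] \<longrightarrow> (hd ks - 1) div b + s < (x - 1) div b"
  proof
    assume "ks \<noteq> []"
    then show "(hd ks - 1) div b + s < (x - 1) div b"
      using h[unfolded ileg_def, THEN conjunct2, rule_format, of 0]
      by (cases ks) auto
  qed
  show "ileg s b ks \<and> (\<forall>y\<in>set ks. y < x) \<and> (ks \<noteq> [] \<longrightarrow> (hd ks - 1) div b + s < (x - 1) div b)"
    using h 1 2 by (simp add: ileg_def)
next
  assume h: "ileg s b ks \<and> (\<forall>y\<in>set ks. y < x) \<and> (ks \<noteq> [] \<longrightarrow> (hd ks - 1) div b + s < (x - 1) div b)"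
  have "\<forall>i. Suc i < length (x#ks) \<longrightarrow> ((x#ks) ! Suc i - 1) div b + s < ((x#ks) ! i - 1) div b"
  proof (intro allI impI)
    fix i assume i: "Suc i < length (x#ks)"
    show "((x#ks) ! Suc i - 1) div b + s < ((x#ks) ! i - 1) div b"
    proof (cases i)
      case 0 then show ?thesis using h i by (cases ks) auto
    next
      case (Suc i') then show ?thesis using h i unfolding ileg_def by auto
    qed
  qed
  then show "ileg s b (x # ks)" using h by (simp add: ileg_def)
qed

lemma bin_cond:
  fixes b y s k :: nat
  assumes "1 \<le> b" "1 \<le> y"
  shows "((y - 1) div b + s < k div b) \<longleftrightarrow> y \<le> b * (k div b - s)"
proof (cases "s < k div b")
  case True
  have "((y - 1) div b + s < k div b) \<longleftrightarrow> (y - 1) div b < k div b - s" using less_diff_conv[of "(y-1) div b" "k div b" s] by simp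
  also have "\<dots> \<longleftrightarrow> y - 1 < (k div b - s) * b" using assms by (simp add: div_less_iff_less_mult)
  also have "\<dots> \<longleftrightarrow> y \<le> b * (k div b - s)" using assms by (auto simp: mult.commute)
  finally show ?thesis .
next
  case False
  then show ?thesis using assms by auto
qed


lemma sum_pos: "ks \<noteq> [] \<Longrightarrow> \<forall>j\<in>set ks. 1 \<le> (a::nat\<Rightarrow>nat) j \<Longrightarrow> 1 \<le> sum_list (map a ks)"
  by (cases ks) auto

lemma core:
  fixes a :: "nat \<Rightarrow> nat"
  assumes b: "1 \<le> b"
  shows "(\<forall>j. 1 \<le> j \<and> j \<le> k \<longrightarrow> a j = NN s b (j-1) + 1) \<Longrightarrow>
    (\<forall>ks. ks \<noteq> [] \<and> set ks \<subseteq> {1..k} \<and> ileg s b ks \<longrightarrow> sum_list (map a ks) \<le> NN s b k) \<and>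
    (\<forall>m. 1 \<le> m \<and> m \<le> NN s b k \<longrightarrow> (\<exists>ks. ks \<noteq> [] \<and> set ks \<subseteq> {1..k} \<and> ileg s b ks \<and> sum_list (map a ks) = m)) \<and>
    (\<forall>ks1 ks2. ks1 \<noteq> [] \<and> set ks1 \<subseteq> {1..k} \<and> ileg s b ks1 \<and>
               ks2 \<noteq> [] \<and> set ks2 \<subseteq> {1..k} \<and> ileg s b ks2 \<and>
               sum_list (map a ks1) = sum_list (map a ks2) \<longrightarrow> ks1 = ks2)"
proof (induction k rule: less_induct)
  case (less k)
  show ?case
  proof (cases k)
    case 0 then show ?thesis by auto
  next
    case (Suc k0)
    define p where "p = b * (k0 div b - s)"
    have pk: "p \<le> k0" unfolding p_def by (rule p_le)
    have hk0: "\<forall>j. 1 \<le> j \<and> j \<le> k0 \<longrightarrow> a j = NN s b (j-1) + 1" using less.prems Suc by auto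
    have hp: "\<forall>j. 1 \<le> j \<and> j \<le> p \<longrightarrow> a j = NN s b (j-1) + 1" using less.prems Suc pk by auto
    have IH0: "(\<forall>ks. ks \<noteq> [] \<and> set ks \<subseteq> {1..k0} \<and> ileg s b ks \<longrightarrow> sum_list (map a ks) \<le> NN s b k0) \<and>
    (\<forall>m. 1 \<le> m \<and> m \<le> NN s b k0 \<longrightarrow> (\<exists>ks. ks \<noteq> [] \<and> set ks \<subseteq> {1..k0} \<and> ileg s b ks \<and> sum_list (map a ks) = m)) \<and>
    (\<forall>ks1 ks2. ks1 \<noteq> [] \<and> set ks1 \<subseteq> {1..k0} \<and> ileg s b ks1 \<and>
               ks2 \<noteq> [] \<and> set ks2 \<subseteq> {1..k0} \<and> ileg s b ks2 \<and>
               sum_list (map a ks1) = sum_list (map a ks2) \<longrightarrow> ks1 = ks2)"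
      using less.IH[of k0] hk0 Suc by auto
    have IHp: "(\<forall>ks. ks \<noteq> [] \<and> set ks \<subseteq> {1..p} \<and> ileg s b ks \<longrightarrow> sum_list (map a ks) \<le> NN s b p) \<and>
    (\<forall>m. 1 \<le> m \<and> m \<le> NN s b p \<longrightarrow> (\<exists>ks. ks \<noteq> [] \<and> set ks \<subseteq> {1..p} \<and> ileg s b ks \<and> sum_list (map a ks) = m)) \<and>
    (\<forall>ks1 ks2. ks1 \<noteq> [] \<and> set ks1 \<subseteq> {1..p} \<and> ileg s b ks1 \<and>
               ks2 \<noteq> [] \<and> set ks2 \<subseteq> {1..p} \<and> ileg s b ks2 \<and>
               sum_list (map a ks1) = sum_list (map a ks2) \<longrightarrow> ks1 = ks2)"
      using less.IH[of p] hp Suc pk by auto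
    have ak: "a k = NN s b k0 + 1" using less.prems Suc by auto
    have NNk: "NN s b k = NN s b k0 + 1 + NN s b p" using Suc p_def by simp
    have apos: "\<And>j. j \<in> {1..k} \<Longrightarrow> 1 \<le> a j" using less.prems by auto
    have split: "set ks \<subseteq> {1..k0} \<or> (\<exists>t. ks = k # t \<and> set t \<subseteq> {1..p} \<and> ileg s b t)"
      if a1: "set ks \<subseteq> {1..k}" and a2: "ileg s b ks" and a3: "ks \<noteq> []" for ks
    proof -
      obtain y t where ks: "ks = y # t" using a3 by (cases ks) auto
      show ?thesis
      proof (cases "y = k")
        case True
        have t1: "ileg s b t" and t2: "\<forall>z\<in>set t. z < k"
          and t3: "t \<noteq> [] \<longrightarrow> (hd t - 1) div b + s < (k-1) div b"
          using a2 ks True ileg_Cons by auto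
        have "set t \<subseteq> {1..p}"
        proof
          fix z assume z: "z \<in> set t"
          then have z1: "1 \<le> z" using a1 ks by auto
          obtain h t' where t: "t = h # t'" using z by (cases t) auto
          have h1: "1 \<le> h" using a1 ks t by auto
          have "h \<le> p" using t3 t bin_cond[OF b h1, of s k0] Suc p_def by auto
          moreover have "z \<le> h" using z t t1 unfolding ileg_def by auto
          ultimately show "z \<in> {1..p}" using z1 by auto
        qed
        then show ?thesis using ks True t1 by auto
      next
        case False
        have "y \<le> k" using a1 ks by auto
        then have "y \<le> k0" using False Suc by auto
        moreover have "\<forall>z\<in>set t. z < y" using a2 ks ileg_Cons by auto
        ultimately have "set ks \<subseteq> {1..k0}" using a1 ks by fastforce
        then show ?thesis by auto
      qed
    qed
    have P1: "\<forall>ks. ks \<noteq> [] \<and> set ks \<subseteq> {1..k} \<and> ileg s b ks \<longrightarrow> sum_list (map a ks) \<le> NN s b k"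
    proof (intro allI impI)
      fix ks assume h: "ks \<noteq> [] \<and> set ks \<subseteq> {1..k} \<and> ileg s b ks"
      have "set ks \<subseteq> {1..k0} \<or> (\<exists>t. ks = k # t \<and> set t \<subseteq> {1..p} \<and> ileg s b t)"
        using split[of ks] h by blast
      then show "sum_list (map a ks) \<le> NN s b k"
      proof
        assume "set ks \<subseteq> {1..k0}"
        then have "sum_list (map a ks) \<le> NN s b k0" using IH0 h by blast
        then show ?thesis using NNk by simp
      next
        assume "\<exists>t. ks = k # t \<and> set t \<subseteq> {1..p} \<and> ileg s b t"
        then obtain t where t: "ks = k # t" "set t \<subseteq> {1..p}" "ileg s b t" by blast
        have "sum_list (map a t) \<le> NN s b p"
        proof (cases "t = []")
          case False then show ?thesis using IHp t by blast
        qed simp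
        then show ?thesis using t ak NNk by simp
      qed
    qed
    have P2: "\<forall>m. 1 \<le> m \<and> m \<le> NN s b k \<longrightarrow> (\<exists>ks. ks \<noteq> [] \<and> set ks \<subseteq> {1..k} \<and> ileg s b ks \<and> sum_list (map a ks) = m)"
    proof (intro allI impI)
      fix m assume m: "1 \<le> m \<and> m \<le> NN s b k"
      show "\<exists>ks. ks \<noteq> [] \<and> set ks \<subseteq> {1..k} \<and> ileg s b ks \<and> sum_list (map a ks) = m"
      proof (cases "m \<le> NN s b k0")
        case True
        then obtain ks where "ks \<noteq> [] \<and> set ks \<subseteq> {1..k0} \<and> ileg s b ks \<and> sum_list (map a ks) = m"
          using IH0 m by blast
        then show ?thesis using Suc by (intro exI[of _ ks]) auto
      next
        case False
        define r where "r = m - a k"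
        have r: "m = a k + r" "r \<le> NN s b p" using False ak m NNk r_def by auto
        show ?thesis
        proof (cases "r = 0")
          case True
          then show ?thesis using r Suc by (intro exI[of _ "[k]"]) (auto simp: ileg_def)
        next
          case False
          then obtain t where t: "t \<noteq> []" "set t \<subseteq> {1..p}" "ileg s b t" "sum_list (map a t) = r"
            using IHp r by (meson less_one linorder_not_less)
          have lt: "\<forall>y\<in>set t. y < k" using t(2) pk Suc by fastforce
          have h1: "1 \<le> hd t" and hp': "hd t \<le> p" using t(1,2) hd_in_set by fastforce+
          have "(hd t - 1) div b + s < (k - 1) div b"
            using bin_cond[OF b h1, of s k0] hp' Suc p_def by auto
          then have "ileg s b (k # t)" using t lt ileg_Cons by auto
          moreover have "set (k # t) \<subseteq> {1..k}" using t(2) pk Suc by auto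
          ultimately show ?thesis using t r by (intro exI[of _ "k # t"]) auto
        qed
      qed
    qed
    have P3: "\<forall>ks1 ks2. ks1 \<noteq> [] \<and> set ks1 \<subseteq> {1..k} \<and> ileg s b ks1 \<and>
               ks2 \<noteq> [] \<and> set ks2 \<subseteq> {1..k} \<and> ileg s b ks2 \<and>
               sum_list (map a ks1) = sum_list (map a ks2) \<longrightarrow> ks1 = ks2"
    proof (intro allI impI)
      fix ks1 ks2 assume h: "ks1 \<noteq> [] \<and> set ks1 \<subseteq> {1..k} \<and> ileg s b ks1 \<and>
               ks2 \<noteq> [] \<and> set ks2 \<subseteq> {1..k} \<and> ileg s b ks2 \<and>
               sum_list (map a ks1) = sum_list (map a ks2)"
      have low: "sum_list (map a ks) \<le> NN s b k0" if "ks \<noteq> []" "set ks \<subseteq> {1..k0}" "ileg s b ks" for ks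
        using IH0 that by blast
      have high: "NN s b k0 < sum_list (map a (k # t))" for t using ak by simp
      have sp: "\<And>t. set t \<subseteq> {1..p} \<Longrightarrow> \<forall>j\<in>set t. 1 \<le> a j"
        using apos pk Suc by force
      have "set ks1 \<subseteq> {1..k0} \<or> (\<exists>t. ks1 = k # t \<and> set t \<subseteq> {1..p} \<and> ileg s b t)"
        "set ks2 \<subseteq> {1..k0} \<or> (\<exists>t. ks2 = k # t \<and> set t \<subseteq> {1..p} \<and> ileg s b t)"
        using split[of ks1] split[of ks2] h by blast+
      then show "ks1 = ks2"
      proof (elim disjE exE conjE)
        assume "set ks1 \<subseteq> {1..k0}" "set ks2 \<subseteq> {1..k0}"
        then show ?thesis using IH0 h by blast
      next
        fix t assume "set ks1 \<subseteq> {1..k0}" "ks2 = k # t"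
        then show ?thesis using low[of ks1] high[of t] h by auto
      next
        fix t assume "set ks2 \<subseteq> {1..k0}" "ks1 = k # t"
        then show ?thesis using low[of ks2] high[of t] h by auto
      next
        fix t1 t2 assume e: "ks1 = k # t1" "set t1 \<subseteq> {1..p}" "ileg s b t1"
          "ks2 = k # t2" "set t2 \<subseteq> {1..p}" "ileg s b t2"
        have eq: "sum_list (map a t1) = sum_list (map a t2)" using h e by simp
        show ?thesis
        proof (cases "t1 = []"; cases "t2 = []")
          assume "t1 = []" "t2 = []" then show ?thesis using e by simp
        next
          assume "t1 = []" "t2 \<noteq> []" then show ?thesis using eq sum_pos[of t2 a] sp[OF e(5)] by simp
        next
          assume "t1 \<noteq> []" "t2 = []" then show ?thesis using eq sum_pos[of t1 a] sp[OF e(2)] by simp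
        next
          assume "t1 \<noteq> []" "t2 \<noteq> []" then show ?thesis using IHp e eq by blast
        qed
      qed
    qed
    show ?thesis using P1 P2 P3 by blast
  qed
qed


lemma div_eq_iff_aux:
  fixes q m b :: nat
  assumes "0 < b"
  shows "q div b = m \<longleftrightarrow> m * b \<le> q \<and> q < (m + 1) * b"
proof
  assume h: "q div b = m"
  have "q div b * b \<le> q" by (simp add: div_times_less_eq_dividend)
  moreover have "q < (q div b + 1) * b" using assms div_less_iff_less_mult[OF assms, of q "q div b + 1"] by simp
  ultimately show "m * b \<le> q \<and> q < (m + 1) * b" using h by simp
next
  assume h: "m * b \<le> q \<and> q < (m + 1) * b"
  have "m \<le> q div b" using h less_eq_div_iff_mult_less_eq[OF assms] by blast
  moreover have "q div b < m + 1" using h div_less_iff_less_mult[OF assms] by blast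
  ultimately show "q div b = m" by simp
qed

lemma div_eq_iff_range:
  fixes j n b :: nat
  assumes "1 \<le> b" "1 \<le> j" "1 \<le> n"
  shows "(b * (n - 1) + 1 \<le> j \<and> j \<le> b * n) \<longleftrightarrow> (j - 1) div b + 1 = n"
proof -
  have "(j - 1) div b + 1 = n \<longleftrightarrow> (j - 1) div b = n - 1" using assms by auto
  also have "\<dots> \<longleftrightarrow> (n - 1) * b \<le> j - 1 \<and> j - 1 < (n - 1 + 1) * b"
    using assms div_eq_iff_aux[of b "j - 1" "n - 1"] by simp
  also have "\<dots> \<longleftrightarrow> (b * (n - 1) + 1 \<le> j \<and> j \<le> b * n)"
    using assms by (auto simp: algebra_simps)
  finally show ?thesis by simp
qed

lemma mem_bin:
  fixes a :: "nat \<Rightarrow> nat"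
  assumes sm: "strict_mono_on {1..} a" and b: "1 \<le> b" and j: "1 \<le> j"
  shows "(a j \<in> gen_bin b a t) \<longleftrightarrow> t = int ((j - 1) div b + 1)"
proof (cases "t \<le> 0")
  case True then show ?thesis by (auto simp: gen_bin_def)
next
  case False
  define n where "n = nat t"
  have n1: "1 \<le> n" and tn: "t = int n" using False n_def by auto
  have R: "{b * (n - 1) + 1 .. b * n} \<subseteq> {1..}" by auto
  have inj: "inj_on a {1..}" using sm strict_mono_on_imp_inj_on by blast
  have "(a j \<in> gen_bin b a t) \<longleftrightarrow> a j \<in> a ` {b * (n - 1) + 1 .. b * n}"
    using False n_def by (simp add: gen_bin_def)
  also have "\<dots> \<longleftrightarrow> j \<in> {b * (n - 1) + 1 .. b * n}"
    using inj_on_image_mem_iff[OF inj _ R] j by auto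
  also have "\<dots> \<longleftrightarrow> (j - 1) div b + 1 = n" using div_eq_iff_range[OF b j n1] by simp
  also have "\<dots> \<longleftrightarrow> t = int ((j - 1) div b + 1)" using tn by auto
  finally show ?thesis .
qed

lemma pair_cond:
  fixes a :: "nat \<Rightarrow> nat"
  assumes sm: "strict_mono_on {1..} a" and b: "1 \<le> b" and y: "1 \<le> y" and yx: "y < x"
  shows "(\<forall>t0::int. \<not> {a x, a y} \<subseteq> (\<Union>t\<in>{t0 - int s..t0}. gen_bin b a t))
         \<longleftrightarrow> (y - 1) div b + s < (x - 1) div b"
proof -
  have x: "1 \<le> x" using y yx by auto
  define bx where "bx = (x - 1) div b"
  define by' where "by' = (y - 1) div b"
  have le: "by' \<le> bx" unfolding bx_def by'_def using yx by (simp add: div_le_mono)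
  have sub: "{a x, a y} \<subseteq> (\<Union>t\<in>{t0 - int s..t0}. gen_bin b a t) \<longleftrightarrow>
      int (bx + 1) \<in> {t0 - int s..t0} \<and> int (by' + 1) \<in> {t0 - int s..t0}" for t0
    using mem_bin[OF sm b x] mem_bin[OF sm b y] unfolding bx_def by'_def by auto
  show ?thesis
  proof
    assume h: "\<forall>t0::int. \<not> {a x, a y} \<subseteq> (\<Union>t\<in>{t0 - int s..t0}. gen_bin b a t)"
    show "(y - 1) div b + s < (x - 1) div b"
    proof (rule ccontr)
      assume "\<not> (y - 1) div b + s < (x - 1) div b"
      then have "bx \<le> by' + s" unfolding bx_def by'_def by simp
      then have "{a x, a y} \<subseteq> (\<Union>t\<in>{int (bx + 1) - int s..int (bx + 1)}. gen_bin b a t)"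
        using sub[of "int (bx + 1)"] le by auto
      then show False using h by blast
    qed
  next
    assume h: "(y - 1) div b + s < (x - 1) div b"
    show "\<forall>t0::int. \<not> {a x, a y} \<subseteq> (\<Union>t\<in>{t0 - int s..t0}. gen_bin b a t)"
      using sub h unfolding bx_def by'_def by auto
  qed
qed

lemma sorted_map_iff:
  fixes a :: "nat \<Rightarrow> nat"
  assumes sm: "strict_mono_on {1..} a" and ks: "set ks \<subseteq> {1..}"
  shows "sorted_wrt (>) (map a ks) \<longleftrightarrow> sorted_wrt (>) ks"
  using ks
proof (induction ks)
  case (Cons x ks)
  have "\<forall>y\<in>set ks. (a y < a x \<longleftrightarrow> y < x)"
    using Cons.prems strict_mono_on_less[OF sm] by auto
  then show ?case using Cons by auto
qed simp

lemma leg_map: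
  fixes a :: "nat \<Rightarrow> nat"
  assumes sm: "strict_mono_on {1..} a" and b: "1 \<le> b" and ks: "set ks \<subseteq> {1..}"
  shows "(sorted_wrt (>) (map a ks) \<and>
     (\<forall>i. Suc i < length (map a ks) \<longrightarrow>
        (\<forall>j::int. \<not> {map a ks ! i, map a ks ! Suc i} \<subseteq> (\<Union>t\<in>{j - int s .. j}. gen_bin b a t))))
     \<longleftrightarrow> ileg s b ks"
proof (cases "sorted_wrt (>) ks")
  case False then show ?thesis using sorted_map_iff[OF sm ks] by (simp add: ileg_def)
next
  case True
  have "(\<forall>j::int. \<not> {map a ks ! i, map a ks ! Suc i} \<subseteq> (\<Union>t\<in>{j - int s .. j}. gen_bin b a t))
        \<longleftrightarrow> (ks ! Suc i - 1) div b + s < (ks ! i - 1) div b" if i: "Suc i < length ks" for i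
  proof -
    have lt: "ks ! Suc i < ks ! i" using sorted_wrt_nth_less[OF True, of i "Suc i"] i by auto
    have y: "1 \<le> ks ! Suc i" using ks nth_mem[OF i] by auto
    show ?thesis using pair_cond[OF sm b y lt, of s] i by (simp add: insert_commute)
  qed
  then show ?thesis using True sorted_map_iff[OF sm ks] by (auto simp: ileg_def)
qed

lemma trans:
  fixes a :: "nat \<Rightarrow> nat"
  assumes sm: "strict_mono_on {1..} a" and b: "1 \<le> b" and I: "I \<subseteq> {1..}"
  shows "gen_legal_decomp s b a (a ` I) m xs \<longleftrightarrow>
    (\<exists>ks. xs = map a ks \<and> ks \<noteq> [] \<and> set ks \<subseteq> I \<and> ileg s b ks \<and> sum_list (map a ks) = m)"
proof
  assume h: "gen_legal_decomp s b a (a ` I) m xs"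
  define ks where "ks = map (inv_into I a) xs"
  have xs: "set xs \<subseteq> a ` I" using h by (simp add: gen_legal_decomp_def)
  have "map (a \<circ> inv_into I a) xs = xs"
  proof (rule map_idI)
    fix x assume "x \<in> set xs"
    then have "x \<in> a ` I" using xs by blast
    then show "(a \<circ> inv_into I a) x = x" by (simp add: f_inv_into_f)
  qed
  then have e: "xs = map a ks" unfolding ks_def by simp
  have kI: "set ks \<subseteq> I" unfolding ks_def using xs by (auto intro: inv_into_into)
  then have k1: "set ks \<subseteq> {1..}" using I by auto
  have "ileg s b ks"
    using leg_map[OF sm b k1, of s] h[unfolded gen_legal_decomp_def e] by blast
  moreover have "ks \<noteq> []" "sum_list (map a ks) = m"
    using h[unfolded gen_legal_decomp_def e] by auto
  ultimately show "\<exists>ks. xs = map a ks \<and> ks \<noteq> [] \<and> set ks \<subseteq> I \<and> ileg s b ks \<and> sum_list (map a ks) = m"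
    using e kI by blast
next
  assume "\<exists>ks. xs = map a ks \<and> ks \<noteq> [] \<and> set ks \<subseteq> I \<and> ileg s b ks \<and> sum_list (map a ks) = m"
  then obtain ks where h: "xs = map a ks" "ks \<noteq> []" "set ks \<subseteq> I" "ileg s b ks" "sum_list (map a ks) = m"
    by blast
  have k1: "set ks \<subseteq> {1..}" using I h by auto
  have l: "sorted_wrt (>) (map a ks) \<and>
     (\<forall>i. Suc i < length (map a ks) \<longrightarrow>
        (\<forall>j::int. \<not> {map a ks ! i, map a ks ! Suc i} \<subseteq> (\<Union>t\<in>{j - int s .. j}. gen_bin b a t)))"
    using leg_map[OF sm b k1, of s] h(4) by blast
  have "set (map a ks) \<subseteq> a ` I" using h(3) by auto
  then show "gen_legal_decomp s b a (a ` I) m xs"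
    unfolding gen_legal_decomp_def h(1) using l h(2,5) by simp
qed

lemma trans_I:
  fixes a :: "nat \<Rightarrow> nat"
  assumes sm: "strict_mono_on {1..} a" and b: "1 \<le> b" and I: "I \<subseteq> {1..}"
    and "ks \<noteq> []" "set ks \<subseteq> I" "ileg s b ks" "sum_list (map a ks) = m"
  shows "gen_legal_decomp s b a (a ` I) m (map a ks)"
proof -
  have "map a ks = map a ks \<and> ks \<noteq> [] \<and> set ks \<subseteq> I \<and> ileg s b ks \<and> sum_list (map a ks) = m"
    using assms(4-7) by simp
  then have "\<exists>ks'. map a ks = map a ks' \<and> ks' \<noteq> [] \<and> set ks' \<subseteq> I \<and> ileg s b ks' \<and> sum_list (map a ks') = m"
    by (rule exI)
  then show ?thesis using trans[OF sm b I, THEN iffD2] by blast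
qed

lemma core_app:
  fixes a :: "nat \<Rightarrow> nat"
  assumes "1 \<le> b" "\<forall>j. 1 \<le> j \<and> j \<le> k \<longrightarrow> a j = NN s b (j-1) + 1"
  shows "\<And>ks. ks \<noteq> [] \<Longrightarrow> set ks \<subseteq> {1..k} \<Longrightarrow> ileg s b ks \<Longrightarrow> sum_list (map a ks) \<le> NN s b k"
    and "\<And>m. 1 \<le> m \<Longrightarrow> m \<le> NN s b k \<Longrightarrow> \<exists>ks. ks \<noteq> [] \<and> set ks \<subseteq> {1..k} \<and> ileg s b ks \<and> sum_list (map a ks) = m"
    and "\<And>ks1 ks2. ks1 \<noteq> [] \<Longrightarrow> set ks1 \<subseteq> {1..k} \<Longrightarrow> ileg s b ks1 \<Longrightarrow>
               ks2 \<noteq> [] \<Longrightarrow> set ks2 \<subseteq> {1..k} \<Longrightarrow> ileg s b ks2 \<Longrightarrow>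
               sum_list (map a ks1) = sum_list (map a ks2) \<Longrightarrow> ks1 = ks2"
  using core[OF assms(1) assms(2)] by blast+

lemma atLeastLessThan_eq: "1 \<le> (j::nat) \<Longrightarrow> {1..<j} = {1..j-1}" by auto

lemma gen_eq:
  fixes a :: "nat \<Rightarrow> nat"
  assumes b: "1 \<le> b" and g: "is_generacci s b a"
  shows "1 \<le> j \<Longrightarrow> a j = NN s b (j-1) + 1"
proof (induction j rule: less_induct)
  case (less j)
  define k where "k = j - 1"
  have hyp: "\<forall>j'. 1 \<le> j' \<and> j' \<le> k \<longrightarrow> a j' = NN s b (j'-1) + 1"
    using less.IH less.prems k_def by auto
  note C = core_app[OF b hyp]
  have sm: "strict_mono_on {1..} a" using g by (simp add: is_generacci_def)
  have I: "{1..<j} \<subseteq> {1..}" by auto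
  have Ik: "{1..<j} = {1..k}" using less.prems k_def by auto
  have g1: "0 < a j" "\<not> (\<exists>xs. gen_legal_decomp s b a (a ` {1..<j}) (a j) xs)"
    "\<And>m. 0 < m \<Longrightarrow> m < a j \<Longrightarrow> \<exists>xs. gen_legal_decomp s b a (a ` {1..<j}) m xs"
  proof -
    have G: "0 < a j \<and> \<not> (\<exists>xs. gen_legal_decomp s b a (a ` {1..<j}) (a j) xs) \<and>
        (\<forall>m. 0 < m \<and> m < a j \<longrightarrow> (\<exists>xs. gen_legal_decomp s b a (a ` {1..<j}) m xs))"
      using g[unfolded is_generacci_def, THEN conjunct2, rule_format, OF less.prems] .
    show "0 < a j" using G by (rule conjunct1)
    show "\<not> (\<exists>xs. gen_legal_decomp s b a (a ` {1..<j}) (a j) xs)" using G[THEN conjunct2, THEN conjunct1] .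
    show "\<And>m. 0 < m \<Longrightarrow> m < a j \<Longrightarrow> \<exists>xs. gen_legal_decomp s b a (a ` {1..<j}) m xs"
      using G[THEN conjunct2, THEN conjunct2] by simp
  qed
  have gt: "NN s b k < a j"
  proof (rule ccontr)
    assume "\<not> NN s b k < a j"
    then obtain ks where "ks \<noteq> [] \<and> set ks \<subseteq> {1..k} \<and> ileg s b ks \<and> sum_list (map a ks) = a j"
      using C(2)[of "a j"] g1(1) by force
    then have "ks \<noteq> []" "set ks \<subseteq> {1..<j}" "ileg s b ks" "sum_list (map a ks) = a j"
      using Ik by simp_all
    then have "gen_legal_decomp s b a (a ` {1..<j}) (a j) (map a ks)"
      by (rule trans_I[OF sm b I])
    then show False using g1(2) by blast
  qed
  have le: "a j \<le> NN s b k + 1"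
  proof (rule ccontr)
    assume "\<not> a j \<le> NN s b k + 1"
    then obtain xs where "gen_legal_decomp s b a (a ` {1..<j}) (NN s b k + 1) xs"
      using g1(3)[of "NN s b k + 1"] by force
    from trans[OF sm b I, THEN iffD1, OF this]
    obtain ks where "ks \<noteq> []" "set ks \<subseteq> {1..<j}" "ileg s b ks" "sum_list (map a ks) = NN s b k + 1"
      by blast
    then have "ks \<noteq> []" "set ks \<subseteq> {1..k}" "ileg s b ks" "sum_list (map a ks) = NN s b k + 1"
      using Ik by simp_all
    then show False using C(1)[of ks] by simp
  qed
  show ?case using gt le k_def by simp
qed

theorem mainTheorem3:
  fixes s b :: nat
  assumes "1 \<le> s" and "1 \<le> b"
  shows "(\<exists>a. is_generacci s b a) \<and>
         (\<forall>a a'. is_generacci s b a \<and> is_generacci s b a' \<longrightarrow> (\<forall>i\<ge>1. a i = a' i)) \<and>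
         (\<forall>a. is_generacci s b a \<longrightarrow>
            (\<forall>m>0. \<exists>!xs. gen_legal_decomp s b a (a ` {1..}) m xs))"
proof (intro conjI)
  note b = assms(2)
  define a0 where "a0 = (\<lambda>k. NN s b (k - 1) + 1)"
  have hyp0: "\<forall>j. 1 \<le> j \<and> j \<le> k \<longrightarrow> a0 j = NN s b (j-1) + 1" for k by (simp add: a0_def)
  have sm0: "strict_mono_on {1..} a0"
  proof (rule strict_mono_onI)
    fix r t :: nat assume "r \<in> {1..}" "t \<in> {1..}" "r < t"
    then have "r - 1 < t - 1" by auto
    then show "a0 r < a0 t" unfolding a0_def using NN_mono_less by simp
  qed
  show "\<exists>a. is_generacci s b a"
  proof (intro exI[of _ a0])
    show "is_generacci s b a0"
      unfolding is_generacci_def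
    proof (intro conjI allI impI sm0)
      fix i :: nat assume i: "1 \<le> i"
      have I: "{1..<i} \<subseteq> {1..}" by auto
      have Ik: "{1..<i} = {1..i-1}" using i by auto
      note C = core_app[OF b hyp0[of "i - 1"]]
      show "0 < a0 i" by (simp add: a0_def)
      show "\<not> (\<exists>xs. gen_legal_decomp s b a0 (a0 ` {1..<i}) (a0 i) xs)"
      proof
        assume "\<exists>xs. gen_legal_decomp s b a0 (a0 ` {1..<i}) (a0 i) xs"
        then obtain xs where "gen_legal_decomp s b a0 (a0 ` {1..<i}) (a0 i) xs" by blast
        from trans[OF sm0 b I, THEN iffD1, OF this]
        obtain ks where "ks \<noteq> []" "set ks \<subseteq> {1..<i}" "ileg s b ks" "sum_list (map a0 ks) = a0 i"
          by blast
        then have "ks \<noteq> []" "set ks \<subseteq> {1..i-1}" "ileg s b ks" "sum_list (map a0 ks) = a0 i"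
          using Ik by simp_all
        then show False using C(1)[of ks] by (simp add: a0_def)
      qed
      fix m assume m: "0 < m \<and> m < a0 i"
      then obtain ks where "ks \<noteq> [] \<and> set ks \<subseteq> {1..i-1} \<and> ileg s b ks \<and> sum_list (map a0 ks) = m"
        using C(2)[of m] by (force simp: a0_def)
      then have "ks \<noteq> []" "set ks \<subseteq> {1..<i}" "ileg s b ks" "sum_list (map a0 ks) = m"
        using Ik by simp_all
      then have "gen_legal_decomp s b a0 (a0 ` {1..<i}) m (map a0 ks)"
        by (rule trans_I[OF sm0 b I])
      then show "\<exists>xs. gen_legal_decomp s b a0 (a0 ` {1..<i}) m xs" by blast
    qed
  qed
  show "\<forall>a a'. is_generacci s b a \<and> is_generacci s b a' \<longrightarrow> (\<forall>i\<ge>1. a i = a' i)"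
  proof (intro allI impI)
    fix a a' :: "nat \<Rightarrow> nat" and i :: nat
    assume h: "is_generacci s b a \<and> is_generacci s b a'" and i: "1 \<le> i"
    have "a i = NN s b (i-1) + 1" using gen_eq[OF b _ i] h by blast
    moreover have "a' i = NN s b (i-1) + 1" using gen_eq[OF b _ i] h by blast
    ultimately show "a i = a' i" by simp
  qed
  show "\<forall>a. is_generacci s b a \<longrightarrow> (\<forall>m>0. \<exists>!xs. gen_legal_decomp s b a (a ` {1..}) m xs)"
  proof (intro allI impI)
    fix a :: "nat \<Rightarrow> nat" and m :: nat
    assume g: "is_generacci s b a" and m: "0 < m"
    have sm: "strict_mono_on {1..} a" using g by (simp add: is_generacci_def)
    have hyp: "\<forall>j. 1 \<le> j \<and> j \<le> k \<longrightarrow> a j = NN s b (j-1) + 1" for k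
      using gen_eq[OF b g] by blast
    have I: "{1..} \<subseteq> {1::nat..}" by simp
    note T = trans[OF sm b I, of s m]
    obtain ks where ks: "ks \<noteq> [] \<and> set ks \<subseteq> {1..m} \<and> ileg s b ks \<and> sum_list (map a ks) = m"
      using core_app(2)[OF b hyp[of m], of m] m NN_ge[of m s b] by force
    have "ks \<noteq> []" "set ks \<subseteq> {1..}" "ileg s b ks" "sum_list (map a ks) = m"
      using ks by auto
    then have ex: "gen_legal_decomp s b a (a ` {1..}) m (map a ks)" by (rule trans_I[OF sm b I])
    show "\<exists>!xs. gen_legal_decomp s b a (a ` {1..}) m xs"
    proof (rule ex1I[of "\<lambda>xs. gen_legal_decomp s b a (a ` {1..}) m xs" "map a ks", OF ex])
      fix xs assume "gen_legal_decomp s b a (a ` {1..}) m xs"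
      from T[THEN iffD1, OF this]
      obtain ks2 where k2: "xs = map a ks2" "ks2 \<noteq> []" "set ks2 \<subseteq> {1..}" "ileg s b ks2" "sum_list (map a ks2) = m"
        by blast
      define K where "K = max m (Max (set ks2))"
      have s1: "set ks \<subseteq> {1..K}"
      proof
        fix x assume x: "x \<in> set ks"
        then have "x \<in> {1..m}" using ks by blast
        then show "x \<in> {1..K}" unfolding K_def by auto
      qed
      have s2: "set ks2 \<subseteq> {1..K}"
      proof
        fix x assume x: "x \<in> set ks2"
        then have "x \<le> Max (set ks2)" by simp
        then have "x \<le> K" unfolding K_def by linarith
        then show "x \<in> {1..K}" using x k2(3) by auto
      qed
      have "ks2 = ks" using core_app(3)[OF b hyp[of K], of ks2 ks] k2 ks s1 s2 by simp
      then show "xs = map a ks" using k2(1) by simp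
    qed
  qed
qed

end
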